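(* If retreat occurs, then there exist $u,L,c>0$ with $0<u<u_-$ (when $a+b<4$, the requirement $u<u_-$ is dropped) and, for every $\epsilon>0$, a number $x_0(\epsilon)>0$, such that for every solution $\mathbf u(t)$ of the mean-field equations with $\mathbf u(0)\in[0,1]^{\mathbb Z}$: if $u_x(0)\le u$ for all $|x|\le L$, then $u_x(t)\le\epsilon$ for all $t>0$ and all $|x|\le ct-x_0(\epsilon)$.
   Context: Fix $a,b>0$ and $M\ge1$; for $x,y\in\mathbb Z$ write $y\sim x$ iff $0<|x-y|\le M$. Mean-field equations: $u_x'=(a u_x^2+\frac{b}{2M}\sum_{y\sim x}u_y^2)(1-u_x)-u_x$, $x\in\mathbb Z$. Let $r=a+b$; for $r>4$, $u_\pm=1/2\pm(1/4-1/r)^{1/2}$; for $r=4$, $u_-=u_+=1/2$. Retreat (for $r\ge4$): there are $0<u_*<u_-\le u_+<u^*\le1$ such that the solution with $u_x(0)=u^*\mathbf 1(x<0)+u_*\mathbf 1(x\ge0)$ satisfies $u_{-1}(t_0)=u_*$ for some $t_0>0$. By convention, retreat also occurs whenever $r<4$. *)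

theory Defs
  imports Complex_Main
begin

definition mf_rhs :: "real \<Rightarrow> real \<Rightarrow> nat \<Rightarrow> (int \<Rightarrow> real) \<Rightarrow> int \<Rightarrow> real" where
  "mf_rhs a b M v x =
     (a * (v x)^2 + b / (2 * real M) * (\<Sum>y\<in>{x - int M .. x + int M} - {x}. (v y)^2))
       * (1 - v x) - v x"

text \<open>A solution of the mean-field equations on [0,\<infinity>) with values in [0,1]
  (the state space; [0,1]^Z is invariant and solutions there are unique).\<close>
definition mf_solution :: "real \<Rightarrow> real \<Rightarrow> nat \<Rightarrow> (real \<Rightarrow> int \<Rightarrow> real) \<Rightarrow> bool" where
  "mf_solution a b M U \<longleftrightarrow>
     (\<forall>t\<ge>0. \<forall>x. 0 \<le> U t x \<and> U t x \<le> 1) \<and>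
     (\<forall>x. \<forall>t\<ge>0. ((\<lambda>s. U s x) has_real_derivative mf_rhs a b M (U t) x) (at t within {0..}))"

definition u_minus :: "real \<Rightarrow> real" where
  "u_minus r = 1/2 - sqrt (1/4 - 1/r)"

definition u_plus :: "real \<Rightarrow> real" where
  "u_plus r = 1/2 + sqrt (1/4 - 1/r)"

definition retreat :: "real \<Rightarrow> real \<Rightarrow> nat \<Rightarrow> bool" where
  "retreat a b M \<longleftrightarrow>
     a + b < 4 \<or>
     (\<exists>ulow uup. 0 < ulow \<and> ulow < u_minus (a + b) \<and> u_minus (a + b) \<le> u_plus (a + b)
        \<and> u_plus (a + b) < uup \<and> uup \<le> 1 \<and>
        (\<exists>U. mf_solution a b M U \<and> (\<forall>x. U 0 x = (if x < 0 then uup else ulow)) \<and>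
             (\<exists>t0>0. U t0 (-1) = ulow)))"

end

theory Submission imports Defs "HOL-Analysis.Analysis" begin


lemma scalar_bound:
  fixes \<phi> \<phi>' :: "real \<Rightarrow> real"
  assumes "t1 \<le> t" "continuous_on {t1..t} \<phi>"
    and der: "\<And>s. t1 < s \<Longrightarrow> s < t \<Longrightarrow> (\<phi> has_real_derivative \<phi>' s) (at s)"
    and "\<phi> t1 \<le> 0"
    and bd: "\<And>s. t1 < s \<Longrightarrow> s < t \<Longrightarrow> \<phi> s > 0 \<Longrightarrow> \<phi>' s \<le> B" and "B \<ge> 0"
  shows "\<phi> t \<le> B * (t - t1)"
proof (cases "\<phi> t \<le> 0")
  case True then show ?thesis using assms by (simp add: mult_nonneg_nonneg order_trans)
next
  case False
  define A where "A = {s \<in> {t1..t}. \<phi> s \<le> (\<lambda>_. 0) s}"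
  have cl: "closed A" unfolding A_def
    by (rule continuous_on_closed_Collect_le) (use assms in auto)
  have ne: "A \<noteq> {}" using assms unfolding A_def by auto
  have bdd: "bdd_above A" unfolding A_def by (auto intro: bdd_aboveI[where M=t])
  define s0 where "s0 = Sup A"
  have s0A: "s0 \<in> A" unfolding s0_def by (rule closed_contains_Sup[OF ne bdd cl])
  hence s0: "t1 \<le> s0" "s0 \<le> t" "\<phi> s0 \<le> 0" unfolding A_def by auto
  have lt: "s0 < t" using s0 False by (cases "s0 = t") auto
  have pos: "\<phi> s > 0" if "s0 < s" "s \<le> t" for s
  proof (rule ccontr)
    assume "\<not> \<phi> s > 0"
    hence "s \<in> A" using that s0 unfolding A_def by auto
    hence "s \<le> s0" unfolding s0_def using bdd by (rule cSup_upper)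
    thus False using that by simp
  qed
  have "\<exists>l z. s0 < z \<and> z < t \<and> DERIV \<phi> z :> l \<and> \<phi> t - \<phi> s0 = (t - s0) * l"
    apply (rule MVT[OF lt])
    using assms(2) apply (rule continuous_on_subset) using s0 apply auto[1]
    using der s0 by (meson order_le_less_trans real_differentiable_def)
  then obtain l z where z: "s0 < z" "z < t" "DERIV \<phi> z :> l" "\<phi> t - \<phi> s0 = (t - s0) * l" by blast
  have "l = \<phi>' z" using DERIV_unique[OF z(3) der] z s0 by simp
  hence "l \<le> B" using bd[of z] pos[of z] z s0 by simp
  hence "(t - s0) * l \<le> (t - s0) * B" using lt by (intro mult_left_mono) auto
  also have "\<dots> \<le> (t - t1) * B" using s0 assms by (intro mult_right_mono) auto
  finally show ?thesis using z s0 by (simp add: mult.commute)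
qed




abbreviation nb :: "nat \<Rightarrow> int \<Rightarrow> int set" where
  "nb M x \<equiv> {x - int M .. x + int M} - {x}"

lemma card_nb: "card (nb M x) = 2 * M"
proof -
  have "card (nb M x) = card {x - int M .. x + int M} - 1"
    by (subst card_Diff_singleton) auto
  thus ?thesis by simp
qed

lemma nb_abs: "y \<in> nb M x \<longleftrightarrow> y \<noteq> x \<and> \<bar>y - x\<bar> \<le> int M" by auto

lemma rhs_const:
  assumes "M \<ge> 1"
  shows "mf_rhs a b M (\<lambda>_. c) x = (a + b) * c^2 * (1 - c) - c"
proof -
  have "b / (2 * real M) * (\<Sum>y\<in>nb M x. c^2) = b * c^2"
    using assms by (simp add: card_nb)
  thus ?thesis unfolding mf_rhs_def by (simp add: algebra_simps)
qed

lemma sum_sq_diff: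
  fixes v w :: "int \<Rightarrow> real"
  assumes "\<And>y. 0 \<le> v y" "\<And>y. v y \<le> 1" "\<And>y. 0 \<le> w y" "\<And>y. w y \<le> 1" "S \<ge> 0"
    and "\<And>y. y \<in> nb M x \<Longrightarrow> v y \<le> w y + S"
  shows "(\<Sum>y\<in>nb M x. (v y)^2) - (\<Sum>y\<in>nb M x. (w y)^2) \<le> real (2*M) * (2*S)"
proof -
  have "(\<Sum>y\<in>nb M x. (v y)^2) - (\<Sum>y\<in>nb M x. (w y)^2) = (\<Sum>y\<in>nb M x. (v y)^2 - (w y)^2)"
    by (simp add: sum_subtractf)
  also have "\<dots> \<le> (\<Sum>y\<in>nb M x. 2*S)"
  proof (rule sum_mono)
    fix y assume y: "y \<in> nb M x"
    show "(v y)^2 - (w y)^2 \<le> 2 * S"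
    proof (cases "v y \<le> w y")
      case True thus ?thesis using assms by (smt (verit) power_mono)
    next
      case False
      have "(v y)^2 - (w y)^2 = (v y - w y) * (v y + w y)" by (simp add: power2_eq_square algebra_simps)
      also have "\<dots> \<le> S * 2" using assms(1-4)[of y] assms(6)[OF y] False
        by (intro mult_mono) auto
      finally show ?thesis by simp
    qed
  qed
  also have "\<dots> = real (2*M) * (2*S)" by (simp add: card_nb)
  finally show ?thesis .
qed

lemma rhs_diff:
  fixes v w :: "int \<Rightarrow> real"
  assumes "\<And>y. 0 \<le> v y" "\<And>y. v y \<le> 1" "\<And>y. 0 \<le> w y" "\<And>y. w y \<le> 1" "S \<ge> 0"
    and "\<And>y. y \<in> nb M x \<Longrightarrow> v y \<le> w y + S" and "w x \<le> v x" "v x \<le> w x + S"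
    and "a \<ge> 0" "b \<ge> 0" "M \<ge> 1"
  shows "mf_rhs a b M v x - mf_rhs a b M w x \<le> (2*a + 2*b) * S"
proof -
  define p where "p = v x" define p' where "p' = w x"
  define Qv where "Qv = (\<Sum>y\<in>nb M x. (v y)^2)"
  define Qw where "Qw = (\<Sum>y\<in>nb M x. (w y)^2)"
  define \<beta> where "\<beta> = b / (2 * real M)"
  have \<beta>0: "\<beta> \<ge> 0" using assms unfolding \<beta>_def by auto
  have Qw0: "Qw \<ge> 0" unfolding Qw_def by (intro sum_nonneg) auto
  have dQ: "Qv - Qw \<le> real (2*M) * (2*S)" unfolding Qv_def Qw_def by (rule sum_sq_diff) (use assms in auto)
  have "\<beta> * (Qv - Qw) \<le> \<beta> * (real (2*M) * (2*S))" using dQ \<beta>0 by (rule mult_left_mono)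
  also have "\<dots> = 2 * b * S" using assms unfolding \<beta>_def by simp
  finally have bQ: "\<beta> * (Qv - Qw) \<le> 2 * b * S" .
  have pp: "p^2 - p'^2 \<le> 2 * S"
  proof -
    have "p^2 - p'^2 = (p - p') * (p + p')" by (simp add: power2_eq_square algebra_simps)
    also have "\<dots> \<le> S * 2" using assms(1-4)[of x] assms(7,8) unfolding p_def p'_def by (intro mult_mono) auto
    finally show ?thesis by simp
  qed
  define A where "A = a * p^2 + \<beta> * Qv"
  define A' where "A' = a * p'^2 + \<beta> * Qw"
  have AA: "A - A' \<le> (2*a + 2*b) * S" unfolding A_def A'_def
  proof -
    have "a * (p^2 - p'^2) \<le> a * (2*S)" using pp assms(9) by (rule mult_left_mono)
    thus "a * p\<^sup>2 + \<beta> * Qv - (a * p'\<^sup>2 + \<beta> * Qw) \<le> (2 * a + 2 * b) * S" using bQ by (simp add: algebra_simps)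
  qed
  have A'0: "A' \<ge> 0" unfolding A'_def using assms \<beta>0 Qw0 by simp
  have p1: "0 \<le> 1 - p" "p' \<le> p" using assms unfolding p_def p'_def by auto
  have S0: "(2*a+2*b)*S \<ge> 0" using assms by simp
  have "A * (1 - p) - A' * (1 - p') - (p - p') = (A - A') * (1 - p) - (A' + 1) * (p - p')"
    by (simp add: algebra_simps)
  also have "\<dots> \<le> (A - A') * (1 - p)" using A'0 p1 by simp
  also have "\<dots> \<le> (2*a+2*b)*S"
  proof (cases "A - A' \<le> 0")
    case True thus ?thesis using p1 S0 by (smt (verit) mult_nonpos_nonneg)
  next
    case False
    have "(A - A') * (1 - p) \<le> (A - A') * 1" using False assms(1)[of x] unfolding p_def by (intro mult_left_mono) auto
    thus ?thesis using AA by simp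
  qed
  finally show ?thesis unfolding mf_rhs_def A_def A'_def p_def p'_def Qv_def Qw_def \<beta>_def by simp
qed




lemma rhs_translate: "mf_rhs a b M (\<lambda>y. w (y + k)) x = mf_rhs a b M w (x + k)"
proof -
  have "(\<Sum>y\<in>nb M x. (w (y + k))^2) = (\<Sum>z\<in>nb M (x + k). (w z)^2)"
    by (rule sum.reindex_bij_witness[where i="\<lambda>z. z - k" and j="\<lambda>y. y + k"]) auto
  thus ?thesis unfolding mf_rhs_def by simp
qed

lemma rhs_reflect: "mf_rhs a b M (\<lambda>y. w (k - y)) x = mf_rhs a b M w (k - x)"
proof -
  have "(\<Sum>y\<in>nb M x. (w (k - y))^2) = (\<Sum>z\<in>nb M (k - x). (w z)^2)"
    by (rule sum.reindex_bij_witness[where i="\<lambda>z. k - z" and j="\<lambda>y. k - y"]) auto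
  thus ?thesis unfolding mf_rhs_def by simp
qed

lemma sol_translate:
  assumes "mf_solution a b M U"
  shows "mf_solution a b M (\<lambda>t x. U t (x + k))"
  using assms unfolding mf_solution_def by (auto simp: rhs_translate)

lemma sol_reflect:
  assumes "mf_solution a b M U"
  shows "mf_solution a b M (\<lambda>t x. U t (k - x))"
  using assms unfolding mf_solution_def by (auto simp: rhs_reflect)

lemma deriv_shift:
  assumes "(f has_real_derivative D) (at (t + \<tau>) within {0..})" "\<tau> \<ge> 0" "t \<ge> 0"
  shows "((\<lambda>s. f (s + \<tau>)) has_real_derivative D) (at t within {0..})"
proof -
  have g: "((\<lambda>s. s + \<tau>) has_real_derivative 1) (at t within {0..})"
    by (auto intro!: derivative_eq_intros)
  have "(f has_real_derivative D) (at ((\<lambda>s. s + \<tau>) t) within ((\<lambda>s. s + \<tau>) ` {0..}))"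
    using assms(1) by (rule has_field_derivative_subset) (use assms in auto)
  from DERIV_image_chain[OF this g] show ?thesis by (simp add: o_def)
qed

lemma sol_shift:
  assumes "mf_solution a b M U" "\<tau> \<ge> 0"
  shows "mf_solution a b M (\<lambda>t. U (t + \<tau>))"
  using assms unfolding mf_solution_def by (auto intro!: deriv_shift)

definition super :: "real \<Rightarrow> real \<Rightarrow> nat \<Rightarrow> (real \<Rightarrow> int \<Rightarrow> real) \<Rightarrow> (real \<Rightarrow> int \<Rightarrow> real) \<Rightarrow> bool" where
  "super a b M Z Z' \<longleftrightarrow> (\<forall>t\<ge>0. \<forall>x. 0 \<le> Z t x) \<and>
     (\<forall>t\<ge>0. \<forall>x. ((\<lambda>s. Z s x) has_real_derivative Z' t x) (at t within {0..})) \<and>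
     (\<forall>t\<ge>0. \<forall>x. Z t x \<le> 1 \<longrightarrow> mf_rhs a b M (\<lambda>y. min 1 (Z t y)) x \<le> Z' t x)"

lemma sol_super:
  assumes "mf_solution a b M U"
  shows "super a b M U (\<lambda>t x. mf_rhs a b M (U t) x)"
proof -
  have "(\<lambda>y. min 1 (U t y)) = U t" if "t \<ge> 0" for t using assms that unfolding mf_solution_def by auto
  thus ?thesis using assms unfolding super_def mf_solution_def by auto
qed

lemma within_to_at:
  assumes "(f has_real_derivative D) (at s within {0..})" "s > 0"
  shows "(f has_real_derivative D) (at s)"
proof -
  have "at s within {0..} = at s within UNIV"
    by (rule at_within_nhd[where S="{0<..}"]) (use assms in auto)
  thus ?thesis using assms by simp
qed




lemma comp:
  assumes sol: "mf_solution a b M U" and sup: "super a b M Z Z'"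
    and init: "\<And>x. U 0 x \<le> Z 0 x" and ab: "a \<ge> 0" "b \<ge> 0" "M \<ge> 1"
  shows "t \<ge> 0 \<Longrightarrow> U t x \<le> Z t x"
proof -
  define K where "K = 2*a + 2*b + 1"
  have K0: "K > 0" unfolding K_def using ab by simp
  define h where "h = 1 / (2*K)"
  have h0: "h > 0" unfolding h_def using K0 by simp
  define D where "D t x = U t x - Z t x" for t x
  have U01: "0 \<le> U t x" "U t x \<le> 1" if "t \<ge> 0" for t x using sol that unfolding mf_solution_def by auto
  have Z0: "0 \<le> Z t x" if "t \<ge> 0" for t x using sup that unfolding super_def by auto
  have Zd: "((\<lambda>s. Z s x) has_real_derivative Z' t x) (at t within {0..})" if "t \<ge> 0" for t x
    using sup that unfolding super_def by auto
  have Zs: "mf_rhs a b M (\<lambda>y. min 1 (Z t y)) x \<le> Z' t x" if "t \<ge> 0" "Z t x \<le> 1" for t x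
    using sup that unfolding super_def by auto
  have Ud: "((\<lambda>s. U s x) has_real_derivative mf_rhs a b M (U t) x) (at t within {0..})" if "t \<ge> 0" for t x
    using sol that unfolding mf_solution_def by auto
  have Dd: "((\<lambda>s. D s x) has_real_derivative (mf_rhs a b M (U t) x - Z' t x)) (at t within {0..})"
    if "t \<ge> 0" for t x unfolding D_def by (intro derivative_intros Ud Zd that)
  have D1: "D t x \<le> 1" if "t \<ge> 0" for t x using U01[OF that, of x] Z0[OF that, of x] unfolding D_def by simp
  have step: "\<forall>t x. 0 \<le> t \<and> t \<le> real n * h \<longrightarrow> D t x \<le> 0" for n
  proof (induction n)
    case 0
    then show ?case using init unfolding D_def by auto
  next
    case (Suc n)
    define t1 where "t1 = real n * h"
    have t10: "t1 \<ge> 0" unfolding t1_def using h0 by simp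
    define SS where "SS = {max 0 (D s y) | s y. t1 \<le> s \<and> s \<le> t1 + h}"
    define S where "S = Sup SS"
    have "max 0 (D t1 0) \<in> SS" unfolding SS_def using h0 by force
    hence SSne: "SS \<noteq> {}" by blast
    have SSbdd: "bdd_above SS" unfolding SS_def
      by (rule bdd_aboveI[where M=1]) (use D1 t10 in force)
    have DS: "D s y \<le> S" if "t1 \<le> s" "s \<le> t1 + h" for s y
    proof -
      have "max 0 (D s y) \<in> SS" unfolding SS_def using that by blast
      hence "max 0 (D s y) \<le> S" unfolding S_def using SSbdd by (rule cSup_upper)
      thus ?thesis by simp
    qed
    have S0: "S \<ge> 0" using DS[of t1 0] h0 by (smt (verit) SSbdd SSne S_def SS_def cSup_upper mem_Collect_eq)
    have bound: "D t x \<le> K * S * (t - t1)" if tt: "t1 \<le> t" "t \<le> t1 + h" for t x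
    proof (rule scalar_bound[where \<phi>="\<lambda>s. D s x" and \<phi>'="\<lambda>s. mf_rhs a b M (U s) x - Z' s x"])
      show "t1 \<le> t" by fact
      have "continuous_on {0..} (\<lambda>s. D s x)" by (rule DERIV_continuous_on) (use Dd in auto)
      thus "continuous_on {t1..t} (\<lambda>s. D s x)" by (rule continuous_on_subset) (use t10 in auto)
      show "((\<lambda>s. D s x) has_real_derivative mf_rhs a b M (U s) x - Z' s x) (at s)" if "t1 < s" "s < t" for s
        using within_to_at[OF Dd] that t10 by simp
      show "D t1 x \<le> 0" using Suc.IH t10 unfolding t1_def by auto
      show "K * S \<ge> 0" using K0 S0 by simp
      show "mf_rhs a b M (U s) x - Z' s x \<le> K * S" if s: "t1 < s" "s < t" "D s x > 0" for s
      proof -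
        have s0: "s \<ge> 0" using s t10 by simp
        have ZU: "Z s x < U s x" using s(3) unfolding D_def by simp
        hence Zx1: "Z s x \<le> 1" using U01[OF s0, of x] by simp
        have "mf_rhs a b M (U s) x - Z' s x \<le> mf_rhs a b M (U s) x - mf_rhs a b M (\<lambda>y. min 1 (Z s y)) x"
          using Zs[OF s0 Zx1] by simp
        also have "\<dots> \<le> (2*a + 2*b) * S"
        proof (rule rhs_diff)
          show "0 \<le> U s y" "U s y \<le> 1" for y using U01[OF s0] by auto
          show "0 \<le> min 1 (Z s y)" "min 1 (Z s y) \<le> 1" for y using Z0[OF s0] by auto
          show "S \<ge> 0" by fact
          have DSs: "U s y \<le> Z s y + S" for y using DS[of s y] s tt unfolding D_def by simp
          show "U s y \<le> min 1 (Z s y) + S" for y using DSs[of y] U01[OF s0, of y] S0 by (simp add: min_def)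
          thus "U s x \<le> min 1 (Z s x) + S" .
          show "min 1 (Z s x) \<le> U s x" using ZU by simp
        qed (use ab in auto)
        also have "\<dots> \<le> K * S" unfolding K_def using S0 by (simp add: algebra_simps)
        finally show ?thesis .
      qed
    qed
    have half: "D t x \<le> S / 2" if "t1 \<le> t" "t \<le> t1 + h" for t x
    proof -
      have "K * S * (t - t1) \<le> K * S * h" using that K0 S0 by (intro mult_left_mono) auto
      also have "\<dots> = S / 2" unfolding h_def using K0 by simp
      finally show ?thesis using bound[OF that, of x] by simp
    qed
    have "S \<le> S / 2" unfolding S_def
    proof (rule cSup_least[OF SSne])
      fix z assume "z \<in> SS"
      then obtain s y where "z = max 0 (D s y)" "t1 \<le> s" "s \<le> t1 + h" unfolding SS_def by blast
      thus "z \<le> Sup SS / 2" using half[of s y] S0 unfolding S_def by simp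
    qed
    hence S00: "S = 0" using S0 by simp
    show ?case
    proof (intro allI impI)
      fix t x assume t: "0 \<le> t \<and> t \<le> real (Suc n) * h"
      show "D t x \<le> 0"
      proof (cases "t \<le> t1")
        case True thus ?thesis using Suc.IH t unfolding t1_def by auto
      next
        case False
        hence "t1 \<le> t" "t \<le> t1 + h" using t unfolding t1_def by (auto simp: algebra_simps)
        thus ?thesis using DS S00 by fastforce
      qed
    qed
  qed
  assume t: "t \<ge> 0"
  obtain n where "t / h \<le> real n" using real_arch_simple by blast
  hence "t \<le> real n * h" using h0 by (simp add: field_simps)
  thus "U t x \<le> Z t x" using step[of n] t unfolding D_def by auto
qed




lemma tail_super:
  assumes W01: "\<And>t x. t \<ge> 0 \<Longrightarrow> 0 \<le> W t x \<and> W t x \<le> 1"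
    and Wd: "\<And>t x. t \<ge> 0 \<Longrightarrow> ((\<lambda>s. W s x) has_real_derivative W' t x) (at t within {0..})"
    and Ws: "\<And>t x. t \<ge> 0 \<Longrightarrow> mf_rhs a b M (W t) x \<le> W' t x"
    and G: "\<And>x. G x > 0" and C: "C \<ge> 1" and GC: "\<And>x y. \<bar>y - x\<bar> \<le> int M \<Longrightarrow> G y \<le> C * G x"
    and mu: "\<mu> = (2*a + 2*b) * C" and ab: "a \<ge> 0" "b \<ge> 0" "M \<ge> 1"
  shows "super a b M (\<lambda>t x. W t x + exp (\<mu> * t) * G x) (\<lambda>t x. W' t x + \<mu> * exp (\<mu> * t) * G x)"
  unfolding super_def
proof (intro conjI allI impI)
  fix t x assume t: "t \<ge> (0::real)"
  show "0 \<le> W t x + exp (\<mu> * t) * G x" using W01[OF t, of x] G[of x] by (simp add: less_imp_le)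
  show "((\<lambda>s. W s x + exp (\<mu> * s) * G x) has_real_derivative W' t x + \<mu> * exp (\<mu> * t) * G x) (at t within {0..})"
    by (rule derivative_eq_intros Wd[OF t] refl | simp)+
  assume Z1: "W t x + exp (\<mu> * t) * G x \<le> 1"
  define e where "e = exp (\<mu> * t)"
  have e0: "e > 0" unfolding e_def by simp
  have "mf_rhs a b M (\<lambda>y. min 1 (W t y + e * G y)) x - mf_rhs a b M (W t) x \<le> (2*a+2*b) * (C * e * G x)"
  proof (rule rhs_diff)
    show "0 \<le> min 1 (W t y + e * G y)" "min 1 (W t y + e * G y) \<le> 1" for y
      using W01[OF t, of y] G[of y] e0 by (auto simp: less_imp_le)
    show "0 \<le> W t y" "W t y \<le> 1" for y using W01[OF t] by auto
    show "0 \<le> C * e * G x" using C e0 G[of x] by (simp add: less_imp_le)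
    show "min 1 (W t y + e * G y) \<le> W t y + C * e * G x" if "y \<in> nb M x" for y
    proof -
      have "\<bar>y - x\<bar> \<le> int M" using that by auto
      hence "e * G y \<le> e * (C * G x)" using GC e0 by (intro mult_left_mono) auto
      thus ?thesis by (simp add: algebra_simps)
    qed
    show "W t x \<le> min 1 (W t x + e * G x)" using Z1 G[of x] e0 unfolding e_def[symmetric] by (simp add: less_imp_le)
    have "e * G x \<le> C * e * G x" using C e0 G[of x] by (simp add: less_imp_le)
    thus "min 1 (W t x + e * G x) \<le> W t x + C * e * G x" by simp
  qed (use ab in auto)
  moreover have "(2*a+2*b) * (C * e * G x) = \<mu> * e * G x" unfolding mu by simp
  ultimately show "mf_rhs a b M (\<lambda>y. min 1 (W t y + exp (\<mu> * t) * G y)) x \<le> W' t x + \<mu> * exp (\<mu> * t) * G x"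
    using Ws[OF t, of x] unfolding e_def by simp
qed

lemma sol_W:
  assumes "mf_solution a b M U"
  shows "\<And>t x. t \<ge> 0 \<Longrightarrow> 0 \<le> U t x \<and> U t x \<le> 1"
    and "\<And>t x. t \<ge> 0 \<Longrightarrow> ((\<lambda>s. U s x) has_real_derivative mf_rhs a b M (U t) x) (at t within {0..})"
    and "\<And>t x. t \<ge> 0 \<Longrightarrow> mf_rhs a b M (U t) x \<le> mf_rhs a b M (U t) x"
  using assms unfolding mf_solution_def by auto

lemma unif_W:
  assumes P01: "\<And>t. t \<ge> 0 \<Longrightarrow> 0 \<le> P t \<and> P t \<le> 1"
    and Pd: "\<And>t. t \<ge> 0 \<Longrightarrow> (P has_real_derivative P' t) (at t within {0..})"
    and Ps: "\<And>t. t \<ge> 0 \<Longrightarrow> (a + b) * (P t)^2 * (1 - P t) - P t \<le> P' t"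
    and M: "M \<ge> 1"
  shows "\<And>t x. t \<ge> 0 \<Longrightarrow> 0 \<le> (\<lambda>t x. P t) t x \<and> (\<lambda>t x. P t) t x \<le> 1"
    and "\<And>t x. t \<ge> 0 \<Longrightarrow> ((\<lambda>s. (\<lambda>t x. P t) s x) has_real_derivative (\<lambda>t x. P' t) t x) (at t within {0..})"
    and "\<And>t x. t \<ge> 0 \<Longrightarrow> mf_rhs a b M ((\<lambda>t x. P t) t) x \<le> (\<lambda>t x. P' t) t x"
    and "super a b M (\<lambda>t x. P t) (\<lambda>t x. P' t)"
proof -
  show "\<And>t x. t \<ge> 0 \<Longrightarrow> 0 \<le> (\<lambda>t x. P t) t x \<and> (\<lambda>t x. P t) t x \<le> 1" using P01 by auto
  show "\<And>t x. t \<ge> 0 \<Longrightarrow> ((\<lambda>s. (\<lambda>t x. P t) s x) has_real_derivative (\<lambda>t x. P' t) t x) (at t within {0..})"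
    using Pd by (simp add: eta_contract_eq)
  show R: "\<And>t x. t \<ge> 0 \<Longrightarrow> mf_rhs a b M ((\<lambda>t x. P t) t) x \<le> (\<lambda>t x. P' t) t x"
    using Ps by (simp add: rhs_const[OF M])
  have "(\<lambda>y. min 1 (P t)) = (\<lambda>y. P t)" if "t \<ge> 0" for t using P01[OF that] by simp
  thus "super a b M (\<lambda>t x. P t) (\<lambda>t x. P' t)" unfolding super_def
    using P01 Pd R by auto
qed




lemma qmono_lo: "0 \<le> x \<Longrightarrow> x \<le> y \<Longrightarrow> y \<le> 1/2 \<Longrightarrow> x * (1 - x) \<le> y * (1 - (y::real))"
proof -
  assume "0 \<le> x" "x \<le> y" "y \<le> 1/2"
  hence "0 \<le> (y - x) * (1 - x - y)" by (intro mult_nonneg_nonneg) auto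
  thus ?thesis by (simp add: algebra_simps)
qed

lemma qmono_hi: "1/2 \<le> y \<Longrightarrow> y \<le> x \<Longrightarrow> x * (1 - x) \<le> y * (1 - (y::real))"
proof -
  assume "1/2 \<le> y" "y \<le> x"
  hence "(x - y) * (1 - x - y) \<le> 0" by (intro mult_nonneg_nonpos) auto
  thus ?thesis by (simp add: algebra_simps)
qed

lemma lo_prop:
  assumes "r \<ge> 4" "0 \<le> u" "u < u_minus r"
  shows "u < 1/2" "r * (u * (1 - u)) < 1"
proof -
  define s where "s = sqrt (1/4 - 1/r)"
  have s0: "s \<ge> 0" unfolding s_def using assms by simp
  have s2: "s^2 = 1/4 - 1/r" unfolding s_def using assms by simp
  have "u < 1/2 - s" using assms unfolding u_minus_def s_def by simp
  thus "u < 1/2" using s0 by simp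
  have "s < 1/2 - u" using \<open>u < 1/2 - s\<close> by simp
  hence "s^2 < (1/2 - u)^2" using s0 by (intro power_strict_mono) auto
  hence "u * (1 - u) < 1 / r" using s2 by (simp add: power2_eq_square algebra_simps)
  thus "r * (u * (1 - u)) < 1" using assms by (simp add: field_simps)
qed

lemma hi_prop:
  assumes "r \<ge> 4" "u_plus r < u"
  shows "1/2 < u" "r * (u * (1 - u)) < 1"
proof -
  define s where "s = sqrt (1/4 - 1/r)"
  have s0: "s \<ge> 0" unfolding s_def using assms by simp
  have s2: "s^2 = 1/4 - 1/r" unfolding s_def using assms by simp
  have "1/2 + s < u" using assms unfolding u_plus_def s_def by simp
  thus "1/2 < u" using s0 by simp
  have "s < u - 1/2" using \<open>1/2 + s < u\<close> by simp
  hence "s^2 < (u - 1/2)^2" using s0 by (intro power_strict_mono) auto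
  hence "u * (1 - u) < 1 / r" using s2 by (simp add: power2_eq_square algebra_simps)
  thus "r * (u * (1 - u)) < 1" using assms by (simp add: field_simps)
qed

lemma uminus_le_half: "r \<ge> 4 \<Longrightarrow> u_minus r \<le> 1/2" unfolding u_minus_def by simp
lemma uplus_ge_half: "r \<ge> 4 \<Longrightarrow> u_plus r \<ge> 1/2" unfolding u_plus_def by simp

lemma const_prem:
  assumes "0 \<le> c" "c \<le> 1" "(a+b) * (c * (1 - c)) \<le> 1"
  shows "\<And>t. t \<ge> 0 \<Longrightarrow> 0 \<le> (\<lambda>t. c) t \<and> (\<lambda>t. c) t \<le> 1"
    and "\<And>t. t \<ge> 0 \<Longrightarrow> ((\<lambda>t. c) has_real_derivative (\<lambda>t. 0) t) (at t within {0..})"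
    and "\<And>t. t \<ge> 0 \<Longrightarrow> (a + b) * ((\<lambda>t. c) t)^2 * (1 - (\<lambda>t. c) t) - (\<lambda>t. c) t \<le> (\<lambda>t. 0) t"
proof -
  show "\<And>t. t \<ge> 0 \<Longrightarrow> 0 \<le> (\<lambda>t. c) t \<and> (\<lambda>t. c) t \<le> 1" using assms by auto
  show "\<And>t. t \<ge> 0 \<Longrightarrow> ((\<lambda>t. c) has_real_derivative (\<lambda>t. 0) t) (at t within {0..})" by simp
  have "c * ((a+b) * (c * (1 - c)) - 1) \<le> 0" using assms by (intro mult_nonneg_nonpos) auto
  thus "\<And>t. t \<ge> 0 \<Longrightarrow> (a + b) * ((\<lambda>t. c) t)^2 * (1 - (\<lambda>t. c) t) - (\<lambda>t. c) t \<le> (\<lambda>t. 0) t"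
    by (simp add: power2_eq_square algebra_simps)
qed

lemma decay_prem:
  assumes l: "0 \<le> l" "l \<le> 1/2" and k: "\<kappa> = 1 - (a+b) * (l * (1 - l))" and ab: "a + b \<ge> 0"
    and rl: "(a+b) * (l * (1 - l)) \<le> 1"
  shows "\<And>t. t \<ge> 0 \<Longrightarrow> 0 \<le> (\<lambda>t. l * exp (- \<kappa> * t)) t \<and> (\<lambda>t. l * exp (- \<kappa> * t)) t \<le> 1"
    and "\<And>t. t \<ge> 0 \<Longrightarrow> ((\<lambda>t. l * exp (- \<kappa> * t)) has_real_derivative (\<lambda>t. - \<kappa> * (l * exp (- \<kappa> * t))) t) (at t within {0..})"
    and "\<And>t. t \<ge> 0 \<Longrightarrow> (a + b) * ((\<lambda>t. l * exp (- \<kappa> * t)) t)^2 * (1 - (\<lambda>t. l * exp (- \<kappa> * t)) t) - (\<lambda>t. l * exp (- \<kappa> * t)) t \<le> (\<lambda>t. - \<kappa> * (l * exp (- \<kappa> * t))) t"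
proof -
  have k0: "\<kappa> \<ge> 0" using k rl by simp
  have Pl: "l * exp (- \<kappa> * t) \<le> l" "0 \<le> l * exp (- \<kappa> * t)" if "t \<ge> 0" for t
  proof -
    have "exp (- \<kappa> * t) \<le> 1" using k0 that by (simp add: mult_nonneg_nonneg)
    thus "l * exp (- \<kappa> * t) \<le> l" using l by (simp add: mult_left_le)
    show "0 \<le> l * exp (- \<kappa> * t)" using l by simp
  qed
  show "\<And>t. t \<ge> 0 \<Longrightarrow> 0 \<le> (\<lambda>t. l * exp (- \<kappa> * t)) t \<and> (\<lambda>t. l * exp (- \<kappa> * t)) t \<le> 1"
    using Pl l by fastforce
  show "\<And>t. t \<ge> 0 \<Longrightarrow> ((\<lambda>t. l * exp (- \<kappa> * t)) has_real_derivative (\<lambda>t. - \<kappa> * (l * exp (- \<kappa> * t))) t) (at t within {0..})"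
    by (rule derivative_eq_intros refl | simp)+
  fix t :: real assume t: "t \<ge> 0"
  define P where "P = l * exp (- \<kappa> * t)"
  have P: "0 \<le> P" "P \<le> l" using Pl[OF t] unfolding P_def by auto
  have "P * (1 - P) \<le> l * (1 - l)" using P l by (intro qmono_lo) auto
  hence "(a+b) * (P * (1 - P)) \<le> (a+b) * (l * (1 - l))" using ab by (intro mult_left_mono) auto
  hence "P * ((a+b) * (P * (1 - P)) - 1 + \<kappa>) \<le> 0" using P k by (intro mult_nonneg_nonpos) auto
  thus "(a + b) * ((\<lambda>t. l * exp (- \<kappa> * t)) t)^2 * (1 - (\<lambda>t. l * exp (- \<kappa> * t)) t) - (\<lambda>t. l * exp (- \<kappa> * t)) t \<le> (\<lambda>t. - \<kappa> * (l * exp (- \<kappa> * t))) t"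
    unfolding P_def[symmetric] by (simp add: power2_eq_square algebra_simps)
qed

lemma top_prem:
  assumes uh: "1/2 \<le> uh" "uh < tp" "tp \<le> 1" and rh: "(a+b) * (uh * (1 - uh)) < 1" and ab: "a + b \<ge> 0"
    and d: "\<delta> = uh * (1 - (a+b) * (uh * (1 - uh)))" and g: "\<gamma> = \<delta> / (tp - uh)"
  shows "\<And>t. t \<ge> 0 \<Longrightarrow> 0 \<le> (\<lambda>t. uh + (tp - uh) * exp (- \<gamma> * t)) t \<and> (\<lambda>t. uh + (tp - uh) * exp (- \<gamma> * t)) t \<le> 1"
    and "\<And>t. t \<ge> 0 \<Longrightarrow> ((\<lambda>t. uh + (tp - uh) * exp (- \<gamma> * t)) has_real_derivative (\<lambda>t. - \<gamma> * ((tp - uh) * exp (- \<gamma> * t))) t) (at t within {0..})"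
    and "\<And>t. t \<ge> 0 \<Longrightarrow> (a + b) * ((\<lambda>t. uh + (tp - uh) * exp (- \<gamma> * t)) t)^2 * (1 - (\<lambda>t. uh + (tp - uh) * exp (- \<gamma> * t)) t) - (\<lambda>t. uh + (tp - uh) * exp (- \<gamma> * t)) t \<le> (\<lambda>t. - \<gamma> * ((tp - uh) * exp (- \<gamma> * t))) t"
    and "\<gamma> > 0"
proof -
  have d0: "\<delta> > 0" using d uh rh by simp
  show g0: "\<gamma> > 0" using g d0 uh by simp
  have Y: "uh \<le> uh + (tp - uh) * exp (- \<gamma> * t)" "uh + (tp - uh) * exp (- \<gamma> * t) \<le> tp" if "t \<ge> 0" for t
  proof -
    have "exp (- \<gamma> * t) \<le> 1" using g0 that by (simp add: mult_nonneg_nonneg)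
    hence "(tp - uh) * exp (- \<gamma> * t) \<le> (tp - uh)" using uh by (simp add: mult_left_le)
    thus "uh + (tp - uh) * exp (- \<gamma> * t) \<le> tp" by simp
    show "uh \<le> uh + (tp - uh) * exp (- \<gamma> * t)" using uh by simp
  qed
  show "\<And>t. t \<ge> 0 \<Longrightarrow> 0 \<le> (\<lambda>t. uh + (tp - uh) * exp (- \<gamma> * t)) t \<and> (\<lambda>t. uh + (tp - uh) * exp (- \<gamma> * t)) t \<le> 1"
    using Y uh by fastforce
  show "\<And>t. t \<ge> 0 \<Longrightarrow> ((\<lambda>t. uh + (tp - uh) * exp (- \<gamma> * t)) has_real_derivative (\<lambda>t. - \<gamma> * ((tp - uh) * exp (- \<gamma> * t))) t) (at t within {0..})"
    by (rule derivative_eq_intros refl | simp)+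
  fix t :: real assume t: "t \<ge> 0"
  define Yt where "Yt = uh + (tp - uh) * exp (- \<gamma> * t)"
  have Yb: "uh \<le> Yt" "Yt \<le> 1" using Y[OF t] uh unfolding Yt_def by auto
  have "Yt * (1 - Yt) \<le> uh * (1 - uh)" using Yb uh by (intro qmono_hi) auto
  hence "(a+b) * (Yt * (1 - Yt)) \<le> (a+b) * (uh * (1 - uh))" using ab by (intro mult_left_mono) auto
  hence neg: "(a+b) * (Yt * (1 - Yt)) - 1 \<le> - (1 - (a+b) * (uh * (1 - uh)))" by simp
  have "Yt * ((a+b) * (Yt * (1 - Yt)) - 1) \<le> uh * ((a+b) * (Yt * (1 - Yt)) - 1)"
    using Yb neg rh by (intro mult_right_mono_neg) auto
  also have "\<dots> \<le> uh * (- (1 - (a+b) * (uh * (1 - uh))))" using neg uh by (intro mult_left_mono) auto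
  also have "\<dots> = - \<delta>" using d by (simp add: algebra_simps)
  also have "- \<delta> \<le> - \<delta> * exp (- \<gamma> * t)"
  proof -
    have "exp (- \<gamma> * t) \<le> 1" using g0 t by (simp add: mult_nonneg_nonneg)
    thus ?thesis using d0 by (simp add: mult_left_le)
  qed
  also have "- \<delta> * exp (- \<gamma> * t) = - \<gamma> * ((tp - uh) * exp (- \<gamma> * t))" using g uh by simp
  finally show "(a + b) * ((\<lambda>t. uh + (tp - uh) * exp (- \<gamma> * t)) t)^2 * (1 - (\<lambda>t. uh + (tp - uh) * exp (- \<gamma> * t)) t) - (\<lambda>t. uh + (tp - uh) * exp (- \<gamma> * t)) t \<le> (\<lambda>t. - \<gamma> * ((tp - uh) * exp (- \<gamma> * t))) t"
    unfolding Yt_def[symmetric] by (simp add: power2_eq_square algebra_simps)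
qed




lemma bump_bound:
  assumes sol: "mf_solution a b M U"
    and P01: "\<And>t. t \<ge> 0 \<Longrightarrow> 0 \<le> P t \<and> P t \<le> 1"
    and Pd: "\<And>t. t \<ge> 0 \<Longrightarrow> (P has_real_derivative P' t) (at t within {0..})"
    and Ps: "\<And>t. t \<ge> 0 \<Longrightarrow> (a + b) * (P t)^2 * (1 - P t) - P t \<le> P' t"
    and init: "\<And>x. \<bar>real_of_int x\<bar> \<le> R \<Longrightarrow> U 0 x \<le> P 0"
    and mu: "\<mu> = (2*a + 2*b) * exp (real M)" and ab: "a \<ge> 0" "b \<ge> 0" "M \<ge> 1" and t: "t \<ge> 0"
  shows "U t x \<le> P t + exp (\<mu> * t) * (exp (real_of_int x - R) + exp (- real_of_int x - R))"
proof -
  define G where "G x = exp (real_of_int x - R) + exp (- real_of_int x - R)" for x :: int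
  note W = unif_W[OF P01 Pd Ps ab(3)]
  have sup: "super a b M (\<lambda>t x. P t + exp (\<mu> * t) * G x) (\<lambda>t x. P' t + \<mu> * exp (\<mu> * t) * G x)"
  proof (rule tail_super[OF W(1,2,3) _ _ _ mu ab])
    show "G x > 0" for x unfolding G_def by (intro add_pos_pos) auto
    show "1 \<le> exp (real M)" by simp
    show "G y \<le> exp (real M) * G x" if "\<bar>y - x\<bar> \<le> int M" for x y
    proof -
      have h: "real_of_int y \<le> real_of_int x + real M" "- real_of_int y \<le> - real_of_int x + real M"
        using that by (auto simp: abs_le_iff)
      have "exp (real_of_int y - R) \<le> exp (real M) * exp (real_of_int x - R)"
        using h unfolding exp_add[symmetric] by simp
      moreover have "exp (- real_of_int y - R) \<le> exp (real M) * exp (- real_of_int x - R)"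
        using h unfolding exp_add[symmetric] by simp
      ultimately show ?thesis unfolding G_def by (simp add: distrib_left)
    qed
  qed
  have "U t x \<le> P t + exp (\<mu> * t) * G x"
  proof (rule comp[OF sol sup _ ab t])
    fix x
    show "U 0 x \<le> P 0 + exp (\<mu> * 0) * G x"
    proof (cases "\<bar>real_of_int x\<bar> \<le> R")
      case True thus ?thesis using init[OF True] unfolding G_def by (smt (verit) exp_gt_zero mult_cancel_right1 mult_zero_left exp_zero)
    next
      case False
      hence "1 \<le> G x" unfolding G_def
        by (smt (verit, best) abs_le_iff exp_ge_zero one_le_exp_iff)
      moreover have "U 0 x \<le> 1" "0 \<le> P 0" using sol P01[of 0] unfolding mf_solution_def by auto
      ultimately show ?thesis by simp
    qed
  qed
  thus ?thesis unfolding G_def .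
qed




context
  fixes a b :: real and M :: nat and ulow uup t0 :: real and v :: "real \<Rightarrow> int \<Rightarrow> real"
  assumes ab: "a > 0" "b > 0" "M \<ge> 1" and r4: "a + b \<ge> 4"
    and ul: "0 < ulow" "ulow < u_minus (a+b)" and uu: "u_plus (a+b) < uup" "uup \<le> 1"
    and vsol: "mf_solution a b M v" and v0: "\<And>x. v 0 x = (if x < 0 then uup else ulow)"
    and t0: "t0 > 0" "v t0 (-1) = ulow"
begin

definition "uh = (u_plus (a+b) + uup) / 2"
definition "dl = uh * (1 - (a+b) * (uh * (1 - uh)))"
definition "gm = dl / (uup - uh)"
definition "mu = (2*a + 2*b) * exp (real M)"
definition "kp = 1 - (a+b) * (ulow * (1 - ulow))"

lemma ab0: "a \<ge> 0" "b \<ge> 0" using ab by auto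

lemma uh_props: "1/2 \<le> uh" "uh < uup" "uh < 1" "(a+b) * (uh * (1 - uh)) < 1" "u_plus (a+b) < uh"
proof -
  show "uh < uup" "u_plus (a+b) < uh" using uu unfolding uh_def by auto
  thus "uh < 1" using uu by simp
  show "1/2 \<le> uh" using hi_prop[OF r4 \<open>u_plus (a+b) < uh\<close>] by simp
  show "(a+b) * (uh * (1 - uh)) < 1" using hi_prop[OF r4 \<open>u_plus (a+b) < uh\<close>] by simp
qed

lemma ulow_props: "ulow < 1/2" "(a+b) * (ulow * (1 - ulow)) < 1" "kp > 0"
  using lo_prop[OF r4 _ ul(2)] ul(1) unfolding kp_def by auto

lemma ul_uu: "ulow < uup"
  using ul(2) uminus_le_half[OF r4] uplus_ge_half[OF r4] uu(1) by simp

lemma mu0: "mu \<ge> 0" unfolding mu_def using ab by simp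

lemma v01: "t \<ge> 0 \<Longrightarrow> 0 \<le> v t x \<and> v t x \<le> 1" using vsol unfolding mf_solution_def by auto

lemma v_le_Y: "t \<ge> 0 \<Longrightarrow> v t x \<le> uh + (uup - uh) * exp (- gm * t)"
proof -
  note T = top_prem[OF uh_props(1,2) uu(2) uh_props(4) _ dl_def gm_def]
  note W = unif_W[OF T(1,2,3) ab(3)]
  assume t: "t \<ge> 0"
  have "v t x \<le> (\<lambda>t x. uh + (uup - uh) * exp (- gm * t)) t x"
    by (rule comp[OF vsol W(4) _ ab0 ab(3) t]) (use v0 ul_uu uu ab in auto)
  thus ?thesis by simp
qed

lemma gm0: "gm > 0"
  using top_prem(4)[OF uh_props(1,2) uu(2) uh_props(4) _ dl_def gm_def] ab by simp

lemma v_le_uup: "t \<ge> 0 \<Longrightarrow> v t x \<le> uup"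
proof -
  assume t: "t \<ge> 0"
  have "exp (- gm * t) \<le> 1" using gm0 t by (simp add: mult_nonneg_nonneg)
  hence "(uup - uh) * exp (- gm * t) \<le> uup - uh" using uh_props by (simp add: mult_left_le)
  thus ?thesis using v_le_Y[OF t, of x] by simp
qed

lemma v_mono1: "t \<ge> 0 \<Longrightarrow> v t (x + 1) \<le> v t x"
  by (rule comp[OF sol_translate[OF vsol] sol_super[OF vsol] _ ab0 ab(3)]) (use v0 ul_uu uu ab in auto)

lemma v_mono: "t \<ge> 0 \<Longrightarrow> x \<le> y \<Longrightarrow> v t y \<le> v t x"
proof -
  assume t: "t \<ge> 0" and xy: "x \<le> y"
  have "v t (x + int n) \<le> v t x" for n
  proof (induction n)
    case (Suc n)
    have e: "x + int (Suc n) = (x + int n) + 1" by simp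
    have "v t ((x + int n) + 1) \<le> v t (x + int n)" by (rule v_mono1[OF t])
    thus ?case using Suc unfolding e by linarith
  qed simp
  from this[of "nat (y - x)"] xy show ?thesis by simp
qed

lemma v_step: "t \<ge> 0 \<Longrightarrow> v (t + t0) x \<le> v t (x + 1)"
proof (rule comp[OF sol_shift[OF vsol] sol_super[OF sol_translate[OF vsol]] _ ab0 ab(3)])
  show "0 \<le> t0" using t0 by simp
  fix x :: int
  show "v (0 + t0) x \<le> v 0 (x + 1)"
  proof (cases "x \<ge> -1")
    case True
    hence "v t0 x \<le> v t0 (-1)" using t0 by (intro v_mono) auto
    thus ?thesis using True t0 v0 by simp
  next
    case False
    thus ?thesis using v_le_uup[of t0 x] t0 v0 by simp
  qed
qed

lemma v_iter: "t \<ge> 0 \<Longrightarrow> v (real n * t0 + t) x \<le> v t (x + int n)"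
proof (induction n arbitrary: x)
  case (Suc n)
  have "v (real (Suc n) * t0 + t) x = v ((real n * t0 + t) + t0) x" by (simp add: algebra_simps)
  also have "\<dots> \<le> v (real n * t0 + t) (x + 1)" using Suc t0 by (intro v_step) auto
  also have "\<dots> \<le> v t (x + 1 + int n)" using Suc by blast
  finally show ?case by (simp add: ac_simps)
qed simp

lemma v_tail: "t \<ge> 0 \<Longrightarrow> v t x \<le> ulow * exp (- kp * t) + exp (mu * t) * exp (- real_of_int x)"
proof -
  assume t: "t \<ge> 0"
  have Dp: "0 \<le> ulow" "ulow \<le> 1/2" "a + b \<ge> 0" "(a+b) * (ulow * (1 - ulow)) \<le> 1"
    using ul ulow_props ab by auto
  note D = decay_prem[where l=ulow and \<kappa>=kp, OF Dp(1,2) kp_def Dp(3,4)]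
  note W = unif_W[OF D ab(3)]
  have sup: "super a b M (\<lambda>t x. ulow * exp (- kp * t) + exp (mu * t) * exp (- real_of_int x))
     (\<lambda>t x. - kp * (ulow * exp (- kp * t)) + mu * exp (mu * t) * exp (- real_of_int x))"
  proof (rule tail_super[OF W(1,2,3) _ _ _ mu_def ab0 ab(3)])
    show "exp (- real_of_int x) > 0" for x by simp
    show "1 \<le> exp (real M)" by simp
    show "exp (- real_of_int y) \<le> exp (real M) * exp (- real_of_int x)" if "\<bar>y - x\<bar> \<le> int M" for x y
    proof -
      have "- real_of_int y \<le> real M + - real_of_int x" using that by (auto simp: abs_le_iff)
      thus ?thesis unfolding exp_add[symmetric] by simp
    qed
  qed
  show ?thesis
  proof (rule comp[OF vsol sup _ ab0 ab(3) t])
    fix x :: int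
    show "v 0 x \<le> ulow * exp (- kp * 0) + exp (mu * 0) * exp (- real_of_int x)"
    proof (cases "x < 0")
      case True
      hence "1 \<le> exp (- real_of_int x)" by simp
      moreover have "v 0 x = uup" using v0 True by simp
      ultimately show ?thesis using uu ul by (simp del: one_le_exp_iff)
    next
      case False thus ?thesis using v0 by simp
    qed
  qed
qed

definition "target = ulow * (1 - exp (- kp * t0)) / 2"
definition "NN = nat \<lceil>mu * t0 - ln target\<rceil>"
definition "lp = ulow * exp (- kp * t0) + exp (mu * t0) * exp (- real NN)"
definition "t1 = (real NN + 2) * t0"
definition "uupp = uh + (uup - uh) * exp (- gm * t1)"
definition "m0 = min (ulow - lp) (uup - uupp)"
definition "W0 = mu * t1 - ln m0"

lemma target0: "target > 0"
proof -
  have "exp (- kp * t0) < 1" using ulow_props(3) t0 by simp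
  thus ?thesis unfolding target_def using ul by simp
qed

lemma lp_lt: "lp < ulow"
proof -
  have "exp (mu * t0) * exp (- real NN) = exp (mu * t0 - real NN)" by (simp add: exp_diff exp_minus field_simps)
  also have "\<dots> \<le> exp (ln target)" unfolding NN_def by simp linarith
  also have "\<dots> = target" using target0 by simp
  finally have "exp (mu * t0) * exp (- real NN) \<le> target" .
  thus ?thesis unfolding lp_def target_def using target0 unfolding target_def by (simp add: field_simps)
qed

lemma t1_pos: "t1 > 0" unfolding t1_def using t0 by simp

lemma uupp_lt: "uupp < uup"
proof -
  have "exp (- gm * t1) < 1" using gm0 t1_pos by simp
  thus ?thesis unfolding uupp_def using uh_props by (smt (verit) mult_less_cancel_left2)
qed

lemma m00: "m0 > 0" unfolding m0_def using lp_lt uupp_lt by simp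

lemma v_t1_lo: "x \<ge> -1 \<Longrightarrow> v t1 x \<le> lp"
proof -
  assume x: "x \<ge> -1"
  have "v t1 x \<le> v t1 (-1)" using x t1_pos by (intro v_mono) auto
  also have e: "t1 = real (NN + 1) * t0 + t0" unfolding t1_def by (simp add: algebra_simps)
  have "v t1 (-1) \<le> v t0 (-1 + int (NN + 1))" unfolding e using t0 by (intro v_iter) auto
  also have "\<dots> = v t0 (int NN)" by simp
  also have "\<dots> \<le> lp" unfolding lp_def using v_tail[of t0 "int NN"] t0 by simp
  finally show ?thesis .
qed

lemma v_t1_hi: "v t1 x \<le> uupp" unfolding uupp_def using v_le_Y t1_pos by simp

lemma step:
  assumes sol: "mf_solution a b M U" and up: "\<And>x. U 0 x \<le> uup"
    and lo: "\<And>x. XL \<le> real_of_int x \<Longrightarrow> real_of_int x \<le> XR \<Longrightarrow> U 0 x \<le> ulow"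
    and W: "XR - XL \<ge> 2 * W0" and x: "(XL + XR) / 2 \<le> real_of_int x"
  shows "U t1 x \<le> uup" "real_of_int x \<le> XR + 1 \<Longrightarrow> U t1 x \<le> ulow"
proof -
  define k where "k = \<lfloor>XR\<rfloor>"
  define V where "V t y = v t (k - y)" for t y
  have Vsol: "mf_solution a b M V" unfolding V_def by (rule sol_reflect[OF vsol])
  define G where "G y = exp (XL - real_of_int y)" for y
  note W3 = sol_W[OF Vsol]
  have sup: "super a b M (\<lambda>t y. V t y + exp (mu * t) * G y) (\<lambda>t y. mf_rhs a b M (V t) y + mu * exp (mu * t) * G y)"
  proof (rule tail_super[OF W3 _ _ _ mu_def ab0 ab(3)])
    show "G y > 0" for y unfolding G_def by simp
    show "1 \<le> exp (real M)" by simp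
    show "G y \<le> exp (real M) * G x" if "\<bar>y - x\<bar> \<le> int M" for x y
    proof -
      have "XL - real_of_int y \<le> real M + (XL - real_of_int x)" using that by (auto simp: abs_le_iff)
      thus ?thesis unfolding G_def exp_add[symmetric] by simp
    qed
  qed
  have bnd: "U t1 x \<le> V t1 x + exp (mu * t1) * G x"
  proof (rule comp[OF sol sup _ ab0 ab(3)])
    show "0 \<le> t1" using t1_pos by simp
    fix y
    show "U 0 y \<le> V 0 y + exp (mu * 0) * G y"
    proof (cases "real_of_int y < XL")
      case True
      hence "1 \<le> G y" unfolding G_def by simp
      moreover have "0 \<le> V 0 y" unfolding V_def using v01[of 0] by simp
      moreover have "U 0 y \<le> 1" using up[of y] uu by simp
      ultimately show ?thesis by simp
    next
      case False
      have G0: "0 \<le> G y" unfolding G_def by simp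
      show ?thesis
      proof (cases "real_of_int y \<le> XR")
        case True
        hence "y \<le> k" unfolding k_def by linarith
        hence "V 0 y = ulow" unfolding V_def using v0 by simp
        thus ?thesis using lo[of y] False True G0 by simp
      next
        case F2: False
        hence "y > k" unfolding k_def by linarith
        hence "V 0 y = uup" unfolding V_def using v0 by simp
        thus ?thesis using up[of y] G0 by simp
      qed
    qed
  qed
  have "exp (mu * t1) * G x = exp (mu * t1 + (XL - real_of_int x))" unfolding G_def by (simp add: exp_add)
  also have "\<dots> \<le> exp (mu * t1 - W0)" using W x by simp
  also have "\<dots> = m0" unfolding W0_def using m00 by simp
  finally have tl: "exp (mu * t1) * G x \<le> m0" .
  show "U t1 x \<le> uup" using bnd tl v_t1_hi[of "k - x"] unfolding V_def m0_def by simp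
  assume "real_of_int x \<le> XR + 1"
  hence "k - x \<ge> -1" unfolding k_def by linarith
  thus "U t1 x \<le> ulow" using bnd tl v_t1_lo[of "k - x"] unfolding V_def m0_def by simp
qed

lemma iter:
  assumes sol: "mf_solution a b M U" and tau: "\<tau> \<ge> 0" and R: "R \<ge> W0" "R \<ge> 0"
    and up: "\<And>x. U \<tau> x \<le> uup" and lo: "\<And>x. \<bar>real_of_int x\<bar> \<le> R \<Longrightarrow> U \<tau> x \<le> ulow"
  shows "U (\<tau> + real n * t1) x \<le> uup \<and> (\<bar>real_of_int x\<bar> \<le> R + real n \<longrightarrow> U (\<tau> + real n * t1) x \<le> ulow)"
proof (induction n arbitrary: x)
  case 0
  then show ?case using up lo by simp
next
  case (Suc n)
  define s where "s = \<tau> + real n * t1"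
  have s0: "s \<ge> 0" unfolding s_def using tau t1_pos by simp
  define U' where "U' t y = U (t + s) y" for t y
  have U'sol: "mf_solution a b M U'" unfolding U'_def using sol_shift[OF sol s0] by simp
  have U'up: "U' 0 y \<le> uup" for y using Suc.IH[of y] unfolding U'_def s_def by simp
  have U'lo: "U' 0 y \<le> ulow" if "- (R + real n) \<le> real_of_int y" "real_of_int y \<le> R + real n" for y
    using Suc.IH[of y] that unfolding U'_def s_def by (simp add: abs_le_iff)
  have W: "(R + real n) - (- (R + real n)) \<ge> 2 * W0" using R by simp
  define U'' where "U'' t y = U' t (0 - y)" for t y
  have U''sol: "mf_solution a b M U''" unfolding U''_def by (rule sol_reflect[OF U'sol])
  have U''up: "U'' 0 y \<le> uup" for y unfolding U''_def using U'up by simp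
  have U''lo: "U'' 0 y \<le> ulow" if "- (R + real n) \<le> real_of_int y" "real_of_int y \<le> R + real n" for y
    unfolding U''_def using U'lo[of "- y"] that by simp
  have e: "\<tau> + real (Suc n) * t1 = t1 + s" unfolding s_def by (simp add: algebra_simps)
  show ?case
  proof (cases "x \<ge> 0")
    case True
    hence m: "(- (R + real n) + (R + real n)) / 2 \<le> real_of_int x" by simp
    note S = step[OF U'sol U'up U'lo W m]
    show ?thesis using S True unfolding e U'_def by auto
  next
    case False
    hence m: "(- (R + real n) + (R + real n)) / 2 \<le> real_of_int (- x)" by simp
    note S = step[OF U''sol U''up U''lo W m]
    show ?thesis using S False unfolding e U''_def U'_def by auto
  qed
qed

lemma main_hi:
  "\<exists>u L c :: real. 0 < u \<and> 0 < L \<and> 0 < c \<and> u < u_minus (a + b) \<and>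
     (\<forall>\<epsilon>>0. \<exists>x0>0. \<forall>U. mf_solution a b M U \<longrightarrow>
        (\<forall>x. \<bar>real_of_int x\<bar> \<le> L \<longrightarrow> U 0 x \<le> u) \<longrightarrow>
        (\<forall>t>0. \<forall>x. \<bar>real_of_int x\<bar> \<le> c * t - x0 \<longrightarrow> U t x \<le> \<epsilon>))"
proof -
  define u where "u = ulow / 2"
  define gm1 where "gm1 = dl / (1 - uh)"
  define q where "q = (1 - uh) / (uup - uh)"
  define T1 where "T1 = ln q / gm1"
  define R0 where "R0 = max W0 1"
  define L where "L = R0 + mu * T1 + ln (4 / ulow)"
  define c where "c = 1 / t1"
  have absum: "a + b \<ge> 0" using ab by simp
  note T = top_prem[OF uh_props(1) uh_props(3) order_refl uh_props(4) absum dl_def gm1_def]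
  have gm10: "gm1 > 0" using T(4) ab by simp
  have q1: "q \<ge> 1" unfolding q_def using uh_props uu by simp
  have T10: "T1 \<ge> 0" unfolding T1_def using q1 gm10 by simp
  have u0: "0 < u" "u < u_minus (a+b)" unfolding u_def using ul by auto
  have R00: "R0 \<ge> W0" "R0 \<ge> 1" unfolding R0_def by auto
  have ln4: "ln (4 / ulow) > 0" using ul ulow_props by simp
  have "mu * T1 \<ge> 0" using mu0 T10 by simp
  hence L0: "L > 0" unfolding L_def using R00 ln4 by linarith
  have c0: "c > 0" unfolding c_def using t1_pos by simp
  have ulp: "(a+b) * (u * (1 - u)) \<le> 1" using lo_prop(2)[OF r4 _ u0(2)] u0 by simp
  note C = const_prem[of u a b, OF _ _ ulp]
  have Dp: "0 \<le> ulow" "ulow \<le> 1/2" "a + b \<ge> 0" "(a+b) * (ulow * (1 - ulow)) \<le> 1"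
    using ul ulow_props ab by auto
  note D = decay_prem[where l=ulow and \<kappa>=kp, OF Dp(1,2) kp_def Dp(3,4)]
  have phase: "U (T1 + real n * t1) x \<le> uup \<and> (\<bar>real_of_int x\<bar> \<le> R0 + real n \<longrightarrow> U (T1 + real n * t1) x \<le> ulow)"
    if sol: "mf_solution a b M U" and init: "\<And>x. \<bar>real_of_int x\<bar> \<le> L \<Longrightarrow> U 0 x \<le> u" for U n x
  proof (rule iter[OF sol T10 R00(1)])
    show "0 \<le> R0" using R00 by simp
    show "U T1 y \<le> uup" for y
    proof -
      note W = unif_W[OF T(1,2,3) ab(3)]
      have "U T1 y \<le> (\<lambda>t x. uh + (1 - uh) * exp (- gm1 * t)) T1 y"
        by (rule comp[OF sol W(4) _ ab0 ab(3) T10]) (use sol in \<open>auto simp: mf_solution_def\<close>)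
      also have "exp (- gm1 * T1) = 1 / q" unfolding T1_def using gm10 q1 by (simp add: exp_minus inverse_eq_divide)
      hence "(\<lambda>t x. uh + (1 - uh) * exp (- gm1 * t)) T1 y = uup" unfolding q_def using uh_props by simp
      finally show ?thesis .
    qed
    show "U T1 y \<le> ulow" if y: "\<bar>real_of_int y\<bar> \<le> R0" for y
    proof -
      have "U T1 y \<le> u + exp (mu * T1) * (exp (real_of_int y - L) + exp (- real_of_int y - L))"
        by (rule bump_bound[OF sol C _ mu_def ab0 ab(3) T10]) (use init u0 ul ulow_props in \<open>auto simp: u_def\<close>)
      also have "exp (mu * T1) * (exp (real_of_int y - L) + exp (- real_of_int y - L)) \<le> exp (mu * T1) * (2 * exp (R0 - L))"
      proof (intro mult_left_mono)
        have h1: "exp (real_of_int y - L) \<le> exp (R0 - L)" using y by (simp add: abs_le_iff)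
        have h2: "exp (- real_of_int y - L) \<le> exp (R0 - L)" using y by (simp add: abs_le_iff)
        from h1 h2 show "exp (real_of_int y - L) + exp (- real_of_int y - L) \<le> 2 * exp (R0 - L)" by linarith
      qed simp
      also have "exp (mu * T1) * (2 * exp (R0 - L)) = 2 * exp (- ln (4 / ulow))"
        unfolding L_def by (simp add: exp_add[symmetric] algebra_simps)
      also have "\<dots> = ulow / 2" using ul by (simp add: exp_minus)
      finally show ?thesis unfolding u_def by simp
    qed
  qed
  show ?thesis
  proof (rule exI[of _ u], rule exI[of _ L], rule exI[of _ c], intro conjI allI impI)
    show "0 < u" "u < u_minus (a+b)" "0 < L" "0 < c" by (fact u0 u0 L0 c0)+
    fix \<epsilon> :: real assume e: "\<epsilon> > 0"
    define se where "se = max 0 (ln (2 / \<epsilon>) / kp)"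
    define x0 where "x0 = (T1 + se) / t1 + 2 + mu * (se + t1) + \<bar>ln (4 / \<epsilon>)\<bar>"
    have se0: "se \<ge> 0" unfolding se_def by simp
    have mse: "mu * (se + t1) \<ge> 0" using mu0 se0 t1_pos by simp
    have Tse: "(T1 + se) / t1 \<ge> 0" using T10 se0 t1_pos by simp
    have x00: "x0 > 0" unfolding x0_def using mse Tse by (smt (verit) abs_ge_zero)
    show "\<exists>x0>0. \<forall>U. mf_solution a b M U \<longrightarrow>
        (\<forall>x. \<bar>real_of_int x\<bar> \<le> L \<longrightarrow> U 0 x \<le> u) \<longrightarrow>
        (\<forall>t>0. \<forall>x. \<bar>real_of_int x\<bar> \<le> c * t - x0 \<longrightarrow> U t x \<le> \<epsilon>)"
    proof (intro exI[of _ x0] conjI allI impI x00)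
      fix U t x assume sol: "mf_solution a b M U" and init: "\<forall>x. \<bar>real_of_int x\<bar> \<le> L \<longrightarrow> U 0 x \<le> u"
        and t: "t > 0" and x: "\<bar>real_of_int x\<bar> \<le> c * t - x0"
      have ct: "c * t = t / t1" unfolding c_def by simp
      have "(T1 + se) / t1 \<le> t / t1" using x ct mse abs_ge_zero[of "real_of_int x"] abs_ge_zero[of "ln (4 / \<epsilon>)"] unfolding x0_def by linarith
      hence tge: "T1 + se \<le> t" using t1_pos by (simp add: divide_le_cancel)
      define n where "n = nat \<lfloor>(t - T1 - se) / t1\<rfloor>"
      have fl0: "0 \<le> (t - T1 - se) / t1" using tge t1_pos by simp
      have n1: "real n \<le> (t - T1 - se) / t1" "(t - T1 - se) / t1 < real n + 1"
        unfolding n_def using fl0 by linarith+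
      define \<tau> where "\<tau> = T1 + real n * t1"
      define s where "s = t - \<tau>"
      have s1: "se \<le> s" unfolding s_def \<tau>_def using n1(1) t1_pos by (simp add: field_simps)
      have s2: "s < se + t1" unfolding s_def \<tau>_def using n1(2) t1_pos by (simp add: field_simps)
      have tau0: "\<tau> \<ge> 0" unfolding \<tau>_def using T10 t1_pos by simp
      have s0: "s \<ge> 0" using s1 se0 by simp
      define U' where "U' s y = U (s + \<tau>) y" for s y
      have U'sol: "mf_solution a b M U'" unfolding U'_def using sol_shift[OF sol tau0] by simp
      have "U' s x \<le> ulow * exp (- kp * s) + exp (mu * s) * (exp (real_of_int x - (R0 + real n)) + exp (- real_of_int x - (R0 + real n)))"
      proof (rule bump_bound[OF U'sol D _ mu_def ab0 ab(3) s0])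
        fix y assume "\<bar>real_of_int y\<bar> \<le> R0 + real n"
        thus "U' 0 y \<le> ulow * exp (- kp * 0)" unfolding U'_def \<tau>_def using phase[OF sol, of n y] init by simp
      qed
      moreover have "U' s x = U t x" unfolding U'_def s_def by simp
      moreover have "ulow * exp (- kp * s) \<le> \<epsilon> / 2"
      proof -
        have "ln (2 / \<epsilon>) / kp \<le> se" unfolding se_def by simp
        hence "kp * (ln (2 / \<epsilon>) / kp) \<le> kp * se" using ulow_props(3) by (intro mult_left_mono) auto
        hence h1: "ln (2 / \<epsilon>) \<le> kp * se" using ulow_props(3) by simp
        have "kp * se \<le> kp * s" using s1 ulow_props(3) by (intro mult_left_mono) auto
        hence "- kp * s \<le> - ln (2 / \<epsilon>)" using h1 by simp
        hence "exp (- kp * s) \<le> exp (- ln (2 / \<epsilon>))" by simp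
        also have "\<dots> = \<epsilon> / 2" using e by (simp add: exp_minus)
        finally have "exp (- kp * s) \<le> \<epsilon> / 2" .
        moreover have "ulow * exp (- kp * s) \<le> exp (- kp * s)" by (rule mult_left_le_one_le) (use ul ulow_props in auto)
        ultimately show ?thesis by linarith
      qed
      moreover have "exp (mu * s) * (exp (real_of_int x - (R0 + real n)) + exp (- real_of_int x - (R0 + real n))) \<le> \<epsilon> / 2"
      proof -
        have xb: "\<bar>real_of_int x\<bar> < real n - 1 - mu * (se + t1) - \<bar>ln (4 / \<epsilon>)\<bar>"
        proof -
          have "t / t1 < real n + 1 + (T1 + se) / t1" using n1(2) t1_pos by (simp add: field_simps)
          thus ?thesis using x ct unfolding x0_def by linarith
        qed
        have "mu * s \<le> mu * (se + t1)" using s2 mu0 by (intro mult_left_mono) auto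
        hence ex: "mu * s + \<bar>real_of_int x\<bar> - (R0 + real n) \<le> - ln (4 / \<epsilon>)" using xb R00 by linarith
        have "exp (real_of_int x - (R0 + real n)) + exp (- real_of_int x - (R0 + real n)) \<le> 2 * exp (\<bar>real_of_int x\<bar> - (R0 + real n))"
        proof -
          have "exp (real_of_int x - (R0 + real n)) \<le> exp (\<bar>real_of_int x\<bar> - (R0 + real n))" by simp
          moreover have "exp (- real_of_int x - (R0 + real n)) \<le> exp (\<bar>real_of_int x\<bar> - (R0 + real n))" by simp
          ultimately show ?thesis by linarith
        qed
        hence "exp (mu * s) * (exp (real_of_int x - (R0 + real n)) + exp (- real_of_int x - (R0 + real n))) \<le> exp (mu * s) * (2 * exp (\<bar>real_of_int x\<bar> - (R0 + real n)))"
          by (intro mult_left_mono) auto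
        also have "\<dots> = 2 * exp (mu * s + \<bar>real_of_int x\<bar> - (R0 + real n))" by (simp add: exp_add[symmetric] algebra_simps)
        also have "\<dots> \<le> 2 * exp (- ln (4 / \<epsilon>))" using ex by simp
        also have "\<dots> = \<epsilon> / 2" using e by (simp add: exp_minus)
        finally show ?thesis .
      qed
      ultimately show "U t x \<le> \<epsilon>" by simp
    qed
  qed
qed

end



lemma main_lo:
  assumes ab: "a > 0" "b > 0" "M \<ge> 1" and r: "a + b < 4"
  shows "\<exists>u L c :: real. 0 < u \<and> 0 < L \<and> 0 < c \<and> (a + b \<ge> 4 \<longrightarrow> u < u_minus (a + b)) \<and>
     (\<forall>\<epsilon>>0. \<exists>x0>0. \<forall>U. mf_solution a b M U \<longrightarrow>
        (\<forall>x. \<bar>real_of_int x\<bar> \<le> L \<longrightarrow> U 0 x \<le> u) \<longrightarrow>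
        (\<forall>t>0. \<forall>x. \<bar>real_of_int x\<bar> \<le> c * t - x0 \<longrightarrow> U t x \<le> \<epsilon>))"
proof -
  define k where "k = 1 - (a + b) / 4"
  have k0: "k > 0" unfolding k_def using r by simp
  have P01: "0 \<le> exp (- k * t) \<and> exp (- k * t) \<le> 1" if "t \<ge> 0" for t
    using k0 that by (simp add: mult_nonneg_nonneg)
  have Pd: "((\<lambda>t. exp (- k * t)) has_real_derivative (\<lambda>t. - k * exp (- k * t)) t) (at t within {0..})" for t
    by (rule derivative_eq_intros refl | simp)+
  have Ps: "(a + b) * ((\<lambda>t. exp (- k * t)) t)^2 * (1 - (\<lambda>t. exp (- k * t)) t) - (\<lambda>t. exp (- k * t)) t \<le> (\<lambda>t. - k * exp (- k * t)) t"
    if "t \<ge> 0" for t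
  proof -
    define P where "P = exp (- k * t)"
    have "P * (1 - P) \<le> 1/4" using sum_squares_ge_zero[of "2*P - 1" 0]
      by (simp add: power2_eq_square algebra_simps)
    hence "(a+b) * (P * (1 - P)) \<le> (a+b) * (1/4)" using ab by (intro mult_left_mono) auto
    hence "P * ((a+b) * (P * (1 - P)) - 1 + k) \<le> 0" unfolding k_def
      by (intro mult_nonneg_nonpos) (auto simp: P_def)
    thus ?thesis unfolding P_def[symmetric] by (simp add: power2_eq_square algebra_simps)
  qed
  have Pd': "\<And>t. t \<ge> 0 \<Longrightarrow> ((\<lambda>t. exp (- k * t)) has_real_derivative (\<lambda>t. - k * exp (- k * t)) t) (at t within {0..})"
    using Pd by simp
  note W = unif_W[OF P01 Pd' Ps ab(3)]
  have bound: "U t x \<le> exp (- k * t)" if sol: "mf_solution a b M U" and t: "t \<ge> 0" for U t x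
  proof -
    have "U t x \<le> (\<lambda>t x. exp (- k * t)) t x"
      by (rule comp[OF sol W(4) _ _ _ ab(3) t]) (use sol ab in \<open>auto simp: mf_solution_def\<close>)
    thus ?thesis by simp
  qed
  show ?thesis
  proof (rule exI[of _ 1], rule exI[of _ 1], rule exI[of _ 1], intro conjI allI impI)
    fix \<epsilon> :: real assume e: "\<epsilon> > 0"
    define x0 where "x0 = max 1 (ln (1 / \<epsilon>) / k)"
    show "\<exists>x0>0. \<forall>U. mf_solution a b M U \<longrightarrow>
        (\<forall>x. \<bar>real_of_int x\<bar> \<le> 1 \<longrightarrow> U 0 x \<le> 1) \<longrightarrow>
        (\<forall>t>0. \<forall>x. \<bar>real_of_int x\<bar> \<le> 1 * t - x0 \<longrightarrow> U t x \<le> \<epsilon>)"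
    proof (rule exI[of _ x0], intro conjI allI impI)
      show "x0 > 0" unfolding x0_def by simp
      fix U t x assume sol: "mf_solution a b M U" and t: "t > 0" and x: "\<bar>real_of_int x\<bar> \<le> 1 * t - x0"
      have "x0 \<le> t" using x abs_ge_zero[of "real_of_int x"] by linarith
      hence "ln (1 / \<epsilon>) / k \<le> t" unfolding x0_def by simp
      hence "ln (1 / \<epsilon>) \<le> k * t" using k0 by (simp add: divide_le_eq mult.commute)
      hence "exp (- k * t) \<le> exp (- ln (1 / \<epsilon>))" by simp
      also have "\<dots> = \<epsilon>" using e by (simp add: exp_minus)
      finally show "U t x \<le> \<epsilon>" using bound[OF sol, of t x] t by simp
    qed
  qed (use r in simp_all)
qed

theorem lemma9p1:
  fixes a b :: real and M :: nat
  assumes "a > 0" and "b > 0" and "M \<ge> 1"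
    and "retreat a b M"
  shows "\<exists>u L c :: real. 0 < u \<and> 0 < L \<and> 0 < c \<and> (a + b \<ge> 4 \<longrightarrow> u < u_minus (a + b)) \<and>
     (\<forall>\<epsilon>>0. \<exists>x0>0. \<forall>U. mf_solution a b M U \<longrightarrow>
        (\<forall>x. \<bar>real_of_int x\<bar> \<le> L \<longrightarrow> U 0 x \<le> u) \<longrightarrow>
        (\<forall>t>0. \<forall>x. \<bar>real_of_int x\<bar> \<le> c * t - x0 \<longrightarrow> U t x \<le> \<epsilon>))"
proof (cases "a + b < 4")
  case True
  thus ?thesis using main_lo assms by blast
next
  case False
  hence r4: "a + b \<ge> 4" by simp
  then obtain ulow uup U where h: "0 < ulow" "ulow < u_minus (a + b)" "u_minus (a + b) \<le> u_plus (a + b)"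
        "u_plus (a + b) < uup" "uup \<le> 1" "mf_solution a b M U" "\<forall>x. U 0 x = (if x < 0 then uup else ulow)"
        and "\<exists>t0>0. U t0 (-1) = ulow"
    using assms(4) False unfolding retreat_def by blast
  then obtain t0 where t0: "t0 > 0" "U t0 (-1) = ulow" by blast
  have "\<exists>u L c :: real. 0 < u \<and> 0 < L \<and> 0 < c \<and> u < u_minus (a + b) \<and>
     (\<forall>\<epsilon>>0. \<exists>x0>0. \<forall>U. mf_solution a b M U \<longrightarrow>
        (\<forall>x. \<bar>real_of_int x\<bar> \<le> L \<longrightarrow> U 0 x \<le> u) \<longrightarrow>
        (\<forall>t>0. \<forall>x. \<bar>real_of_int x\<bar> \<le> c * t - x0 \<longrightarrow> U t x \<le> \<epsilon>))"
    by (rule main_hi[OF assms(1,2,3) r4 h(1,2,4,5,6) _ t0]) (use h(7) in auto)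
  thus ?thesis by blast
qed


end
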